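(* Let $\mathcal{J}$ be an ideal on $\omega$ which is good. Then $\min\{\mathrm{cov}^{+}_{h}(\mathcal{J}),\mathfrak{b}\}\leq\mathfrak{a}(\mathcal{J})$.
   Context: An ideal on a countable set $X$ is a family of subsets of $X$ closed under subsets and finite unions, containing all finite sets and not containing $X$. $\mathcal{J}^{+}=\mathcal{P}(\omega)\setminus\mathcal{J}$ denotes the $\mathcal{J}$-positive sets. For $X\in\mathcal{J}^+$, $\mathcal{J}|_X=\{A\subseteq X: A\in\mathcal{J}\}$, an ideal on $X$. $\mathfrak{a}(\mathcal{J})$ is the smallest size of an uncountable family $\mathcal{A}\subseteq\mathcal{J}^{+}$ which is maximal with respect to the property that $A\cap B\in\mathcal{J}$ for all distinct $A,B\in\mathcal{A}$. $\mathrm{cov}^{+}(\mathcal{J})=\min\{|\mathcal{F}|:\mathcal{F}\subseteq\mathcal{J}$ and for every $X\in\mathcal{J}^{+}$ there is $F\in\mathcal{F}$ with $|X\cap F|=\omega\}$, and $\mathrm{cov}^{+}_{h}(\mathcal{J})=\min\{\mathrm{cov}^{+}(\mathcal{J}|_{X}):X\in\mathcal{J}^{+}\}$. $\mathfrak{b}$ is the least size of a family in $\omega^\omega$ unbounded with respect to eventual domination $\leq^*$. $\mathcal{J}$ is called good if every uncountable family $\mathcal{F}\subseteq\mathcal{J}^{+}$ has a subfamily $\{B_{n}:n\in\omega\}\subseteq\mathcal{F}$ such that for every $f\in\omega^{\omega}$ there is a sequence $\{C_{n}:n\in\omega\}\subseteq\mathcal{J}$ with $C_{n}\subseteq B_{n}\setminus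 f(n)$ for every $n$ such that $\bigcup_{n}C_{n}\in\mathcal{J}^{+}$. *)

theory Defs
  imports Main "HOL-Library.Equipollence" "HOL-Library.Countable_Set"
begin

definition is_ideal :: "nat set set \<Rightarrow> bool" where
  "is_ideal J \<longleftrightarrow>
     (\<forall>A B. A \<in> J \<longrightarrow> B \<subseteq> A \<longrightarrow> B \<in> J) \<and>
     (\<forall>A B. A \<in> J \<longrightarrow> B \<in> J \<longrightarrow> A \<union> B \<in> J) \<and>
     (\<forall>A. finite A \<longrightarrow> A \<in> J) \<and>
     UNIV \<notin> J"

definition positive :: "nat set set \<Rightarrow> nat set set" where
  "positive J = - J"

definition restr :: "nat set set \<Rightarrow> nat set \<Rightarrow> nat set set" where
  "restr J X = {A. A \<subseteq> X \<and> A \<in> J}"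

text \<open>Uncountable families maximal with respect to J-almost disjointness
  (the families over which a(J) is the minimum).\<close>
definition max_J_AD :: "nat set set \<Rightarrow> nat set set \<Rightarrow> bool" where
  "max_J_AD J \<A> \<longleftrightarrow>
     \<not> countable \<A> \<and> \<A> \<subseteq> positive J \<and>
     (\<forall>A\<in>\<A>. \<forall>B\<in>\<A>. A \<noteq> B \<longrightarrow> A \<inter> B \<in> J) \<and>
     (\<forall>B \<in> positive J. B \<notin> \<A> \<longrightarrow> (\<exists>A\<in>\<A>. A \<inter> B \<notin> J))"

text \<open>Witness families for cov+(J|X): F \<subseteq> J|X such that every
  (J|X)-positive set meets some member of F in an infinite set.\<close>
definition cov_plus_family :: "nat set set \<Rightarrow> nat set \<Rightarrow> nat set set \<Rightarrow> bool" where
  "cov_plus_family J X \<F> \<longleftrightarrow>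
     \<F> \<subseteq> restr J X \<and>
     (\<forall>Y. Y \<subseteq> X \<and> Y \<notin> restr J X \<longrightarrow> (\<exists>F\<in>\<F>. infinite (Y \<inter> F)))"

text \<open>Eventual domination and unbounded families (witnesses for b).\<close>
definition le_star :: "(nat \<Rightarrow> nat) \<Rightarrow> (nat \<Rightarrow> nat) \<Rightarrow> bool" where
  "le_star f g \<longleftrightarrow> (\<forall>\<^sub>F n in sequentially. f n \<le> g n)"

definition unbounded_family :: "(nat \<Rightarrow> nat) set \<Rightarrow> bool" where
  "unbounded_family U \<longleftrightarrow> \<not> (\<exists>g. \<forall>f\<in>U. le_star f g)"

text \<open>Good ideals.  The subfamily {B_n : n \<in> omega} is an injective enumeration.
  B_n \<setminus> f(n) means B_n minus the natural number f(n) = {0..<f n}.\<close>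
definition good :: "nat set set \<Rightarrow> bool" where
  "good J \<longleftrightarrow>
     (\<forall>\<F>. \<F> \<subseteq> positive J \<and> \<not> countable \<F> \<longrightarrow>
        (\<exists>B :: nat \<Rightarrow> nat set. inj B \<and> range B \<subseteq> \<F> \<and>
           (\<forall>f :: nat \<Rightarrow> nat. \<exists>C :: nat \<Rightarrow> nat set.
              (\<forall>n. C n \<in> J \<and> C n \<subseteq> B n - {0..<f n}) \<and>
              (\<Union>n. C n) \<in> positive J)))"

end

theory Submission
  imports Defs
begin

lemma ideal_UN:
  assumes "is_ideal J" "finite S" "\<forall>n\<in>S. C n \<in> J"
  shows "(\<Union>n\<in>S. C n) \<in> J"
proof -
  have U: "\<And>A B. A \<in> J \<Longrightarrow> B \<in> J \<Longrightarrow> A \<union> B \<in> J"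
    and F: "\<And>A. finite A \<Longrightarrow> A \<in> J"
    using assms(1) unfolding is_ideal_def by blast+
  show ?thesis
    using assms(2,3)
  proof (induction S rule: finite_induct)
    case empty
    then show ?case using F by simp
  next
    case (insert x S)
    then have "C x \<in> J" "(\<Union>n\<in>S. C n) \<in> J" by auto
    then show ?case using U by simp
  qed
qed

theorem mainTheorem1:
  fixes J :: "nat set set"
  assumes "is_ideal J" and "good J"
  shows "\<forall>\<A>. max_J_AD J \<A> \<longrightarrow>
           (\<exists>X \<in> positive J. \<exists>\<F>. cov_plus_family J X \<F> \<and> \<F> \<lesssim> \<A>) \<or>
           (\<exists>U. unbounded_family U \<and> U \<lesssim> \<A>)"
proof (intro allI impI)
  fix \<A> assume M: "max_J_AD J \<A>"
  have Isub: "\<And>A B. A \<in> J \<Longrightarrow> B \<subseteq> A \<Longrightarrow> B \<in> J"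
    and Ifin: "\<And>A. finite A \<Longrightarrow> A \<in> J"
    using assms(1) unfolding is_ideal_def by blast+
  have Munc: "\<not> countable \<A>" and Msub: "\<A> \<subseteq> positive J"
    and AD: "\<forall>A\<in>\<A>. \<forall>B\<in>\<A>. A \<noteq> B \<longrightarrow> A \<inter> B \<in> J"
    and Mmax: "\<forall>B \<in> positive J. B \<notin> \<A> \<longrightarrow> (\<exists>A\<in>\<A>. A \<inter> B \<notin> J)"
    using M unfolding max_J_AD_def by blast+
  show "(\<exists>X \<in> positive J. \<exists>\<F>. cov_plus_family J X \<F> \<and> \<F> \<lesssim> \<A>) \<or>
           (\<exists>U. unbounded_family U \<and> U \<lesssim> \<A>)"
  proof (cases "\<exists>A\<in>\<A>. cov_plus_family J A ((\<lambda>A'. A \<inter> A') ` (\<A> - {A}))")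
    case True
    then obtain A where A: "A \<in> \<A>" "cov_plus_family J A ((\<lambda>A'. A \<inter> A') ` (\<A> - {A}))" by blast
    have "A \<in> positive J" using Msub A by blast
    moreover have "(\<lambda>A'. A \<inter> A') ` (\<A> - {A}) \<lesssim> \<A>"
      by (meson Diff_subset image_lepoll lepoll_trans subset_imp_lepoll)
    ultimately show ?thesis using A by blast
  next
    case False
    have "\<forall>A\<in>\<A>. \<exists>Y. Y \<subseteq> A \<and> Y \<notin> J \<and> (\<forall>A'\<in>\<A>. A' \<noteq> A \<longrightarrow> finite (Y \<inter> A'))"
    proof
      fix A assume A: "A \<in> \<A>"
      have sub: "(\<lambda>A'. A \<inter> A') ` (\<A> - {A}) \<subseteq> restr J A"
        using AD A unfolding restr_def by blast
      define FF where "FF = (\<lambda>A'. A \<inter> A') ` (\<A> - {A})"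
      have "\<not> cov_plus_family J A FF" using False A unfolding FF_def by blast
      moreover have "FF \<subseteq> restr J A" using sub unfolding FF_def .
      ultimately have "\<not> (\<forall>Y. Y \<subseteq> A \<and> Y \<notin> restr J A \<longrightarrow> (\<exists>F\<in>FF. infinite (Y \<inter> F)))"
        unfolding cov_plus_family_def by blast
      then obtain Y where Y: "Y \<subseteq> A" "Y \<notin> restr J A" "\<forall>F\<in>FF. finite (Y \<inter> F)"
        by blast
      have "Y \<notin> J" using Y unfolding restr_def by auto
      moreover have "\<forall>A'\<in>\<A>. A' \<noteq> A \<longrightarrow> finite (Y \<inter> A')"
      proof (intro ballI impI)
        fix A' assume "A' \<in> \<A>" "A' \<noteq> A"
        then have "finite (Y \<inter> (A \<inter> A'))" using Y(3) unfolding FF_def by blast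
        moreover have "Y \<inter> A' = Y \<inter> (A \<inter> A')" using Y(1) by blast
        ultimately show "finite (Y \<inter> A')" by simp
      qed
      ultimately show "\<exists>Y. Y \<subseteq> A \<and> Y \<notin> J \<and> (\<forall>A'\<in>\<A>. A' \<noteq> A \<longrightarrow> finite (Y \<inter> A'))"
        using Y(1) by blast
    qed
    from bchoice[OF this] obtain Y where Y: "\<forall>A\<in>\<A>. Y A \<subseteq> A \<and> Y A \<notin> J \<and> (\<forall>A'\<in>\<A>. A' \<noteq> A \<longrightarrow> finite (Y A \<inter> A'))"
      by blast
    have injY: "inj_on Y \<A>"
    proof (rule inj_onI, rule ccontr)
      fix A A' assume h: "A \<in> \<A>" "A' \<in> \<A>" "Y A = Y A'" "A \<noteq> A'"
      then have "finite (Y A \<inter> A')" using Y by blast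
      moreover have "Y A \<subseteq> A'" using h Y by simp
      ultimately have "finite (Y A)" by (simp add: Int_absorb2)
      then show False using Ifin Y h by blast
    qed
    have unc: "\<not> countable (Y ` \<A>)"
      using Munc injY countable_image_inj_on by blast
    have pos: "Y ` \<A> \<subseteq> positive J" unfolding positive_def using Y by blast
    have G: "\<forall>\<F>. \<F> \<subseteq> positive J \<and> \<not> countable \<F> \<longrightarrow>
        (\<exists>B :: nat \<Rightarrow> nat set. inj B \<and> range B \<subseteq> \<F> \<and>
           (\<forall>f :: nat \<Rightarrow> nat. \<exists>C :: nat \<Rightarrow> nat set.
              (\<forall>n. C n \<in> J \<and> C n \<subseteq> B n - {0..<f n}) \<and>
              (\<Union>n. C n) \<in> positive J))" using assms(2) unfolding good_def .
    from G[rule_format, OF conjI[OF pos unc]] obtain B where B: "inj B" "range B \<subseteq> Y ` \<A>"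
      and Bf: "\<forall>f :: nat \<Rightarrow> nat. \<exists>C :: nat \<Rightarrow> nat set.
              (\<forall>n. C n \<in> J \<and> C n \<subseteq> B n - {0..<f n}) \<and> (\<Union>n. C n) \<in> positive J"
      by blast
    define gA where "gA A n = (if finite (A \<inter> B n) then Suc (Max (A \<inter> B n)) else 0)" for A n
    have gA_prop: "x < gA A n" if "finite (A \<inter> B n)" "x \<in> A \<inter> B n" for A n x
      using that by (simp add: gA_def less_Suc_eq_le)
    show ?thesis
    proof (cases "unbounded_family (gA ` \<A>)")
      case True then show ?thesis using image_lepoll by blast
    next
      case False
      then obtain g where g: "\<forall>A\<in>\<A>. le_star (gA A) g"
        unfolding unbounded_family_def by blast
      from Bf obtain C where C: "\<forall>n. C n \<in> J \<and> C n \<subseteq> B n - {0..<g n}" "(\<Union>n. C n) \<in> positive J"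
        by blast
      define Z where "Z = (\<Union>n. C n)"
      have ZA: "Z \<inter> A \<in> J" if A: "A \<in> \<A>" for A
      proof -
        from g A obtain N where N: "\<forall>n\<ge>N. gA A n \<le> g n"
          unfolding le_star_def eventually_sequentially by blast
        define S where "S = {..<N} \<union> B -` {Y A}"
        have "finite (B -` {Y A})" using B(1) by (simp add: finite_vimageI)
        then have finS: "finite S" unfolding S_def by simp
        have "Z \<inter> A \<subseteq> (\<Union>n\<in>S. C n)"
        proof
          fix x assume "x \<in> Z \<inter> A"
          then obtain n where x: "x \<in> C n" "x \<in> A" by (auto simp: Z_def)
          show "x \<in> (\<Union>n\<in>S. C n)"
          proof (cases "n < N \<or> B n = Y A")
            case True then show ?thesis using x by (auto simp: S_def)
          next
            case False
            then have nN: "n \<ge> N" and BY: "B n \<noteq> Y A" by auto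
            from B(2) obtain A' where A': "A' \<in> \<A>" "B n = Y A'" by blast
            then have "A' \<noteq> A" using BY by auto
            then have "finite (Y A' \<inter> A)" using Y A A' by blast
            then have fin: "finite (A \<inter> B n)" using A' by (simp add: Int_commute)
            have "x \<in> A \<inter> B n" using x C(1) by auto
            then have "x < gA A n" using gA_prop fin by blast
            also have "\<dots> \<le> g n" using N nN by auto
            finally have "x < g n" .
            moreover have "x \<notin> {0..<g n}" using x C(1) by blast
            then have "x \<ge> g n" by simp
            ultimately show ?thesis by simp
          qed
        qed
        moreover have "(\<Union>n\<in>S. C n) \<in> J" using ideal_UN[OF assms(1) finS] C(1) by blast
        ultimately show ?thesis using Isub by blast
      qed
      have Zpos: "Z \<notin> J" using C(2) unfolding Z_def positive_def by simp
      have "Z \<notin> \<A>"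
      proof
        assume "Z \<in> \<A>"
        then have "Z \<inter> Z \<in> J" using ZA by blast
        then show False using Zpos by simp
      qed
      then obtain A where "A \<in> \<A>" "A \<inter> Z \<notin> J"
        using Mmax Zpos unfolding positive_def by blast
      then show ?thesis using ZA by (metis Int_commute)
    qed
  qed
qed

end
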